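(* Let $p$ be a prime and let $A^*(\mathbf{Q}_p)$ be the group, under composition, of maps $f(x)=ax+b$ on $\mathbf{Q}_p$ with $a\in\mathbf{Q}_p\setminus\{0\}$, $b\in\mathbf{Q}_p$, topologized as a subset of $\mathbf{Q}_p\times\mathbf{Q}_p$ via $(a,b)$; let $A^*(\mathbf{Z}_p)$ be the subgroup with $|a|_p=1$, $b\in\mathbf{Z}_p$. For $f\in A^*(\mathbf{Q}_p)$ define $L(f)=\max(|a-1|_p,|b|_p)$. Fix $t\ge1$ and put $L'(f)=L(f)$ if $f\in A^*(\mathbf{Z}_p)$ and $L'(f)=t$ otherwise. Then $L'(f^{-1})=L'(f)$ and $L'(f\circ g)\le\max(L'(f),L'(g))$ for all $f,g\in A^*(\mathbf{Q}_p)$, and $L'(g^{-1}\circ f)$ is a left-invariant ultrametric on $A^*(\mathbf{Q}_p)$ determining its usual topology; for $f,g\in A^*(\mathbf{Z}_p)$ it equals $\max(|a-c|_p,|b-d|_p)$ where $g(x)=cx+d$.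
   Context: $|\cdot|_p$ is the $p$-adic absolute value and $\mathbf{Z}_p$ the $p$-adic integers. *)

theory Defs
  imports "HOL-Analysis.Analysis" "HOL-Computational_Algebra.Computational_Algebra"
begin

definition padic_abs_rat :: "nat \<Rightarrow> rat \<Rightarrow> real" where
  "padic_abs_rat p q =
     (if q = 0 then 0
      else (let (a, b) = quotient_of q in
            real p powi (int (multiplicity (int p) b) - int (multiplicity (int p) a))))"

text \<open>This is the defining property of
  Q_p as the completion of Q w.r.t. |.|_p (unique up to isometric isomorphism).\<close>
definition is_Qp :: "nat \<Rightarrow> ('a::field_char_0 \<Rightarrow> real) \<Rightarrow> bool" where
  "is_Qp p absv \<longleftrightarrow>
     (\<forall>x. absv x \<ge> 0) \<and> (\<forall>x. absv x = 0 \<longleftrightarrow> x = 0) \<and>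
     (\<forall>x y. absv (x * y) = absv x * absv y) \<and>
     (\<forall>x y. absv (x + y) \<le> max (absv x) (absv y)) \<and>
     (\<forall>q. absv (of_rat q) = padic_abs_rat p q) \<and>
     (\<forall>X::nat \<Rightarrow> 'a. (\<forall>e>0. \<exists>N. \<forall>m\<ge>N. \<forall>n\<ge>N. absv (X m - X n) < e) \<longrightarrow>
         (\<exists>l. \<forall>e>0. \<exists>N. \<forall>n\<ge>N. absv (X n - l) < e)) \<and>
     (\<forall>x. \<forall>e>0. \<exists>q. absv (x - of_rat q) < e)"

text \<open>Affine maps x \<mapsto> a x + b are represented by their coefficient pairs (a,b).\<close>
definition aff_fun :: "'a::field \<times> 'a \<Rightarrow> 'a \<Rightarrow> 'a" where
  "aff_fun f = (\<lambda>x. fst f * x + snd f)"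

definition aff_comp :: "'a::field \<times> 'a \<Rightarrow> 'a \<times> 'a \<Rightarrow> 'a \<times> 'a" where
  "aff_comp f g = (fst f * fst g, fst f * snd g + snd f)"

definition aff_inv :: "'a::field \<times> 'a \<Rightarrow> 'a \<times> 'a" where
  "aff_inv f = (inverse (fst f), - snd f / fst f)"

lemma aff_fun_comp: "aff_fun (aff_comp f g) = aff_fun f \<circ> aff_fun g"
  by (auto simp: aff_fun_def aff_comp_def fun_eq_iff algebra_simps)

lemma aff_fun_inv: "fst f \<noteq> 0 \<Longrightarrow> aff_fun (aff_inv f) \<circ> aff_fun f = id
    \<and> aff_fun f \<circ> aff_fun (aff_inv f) = id"
  by (auto simp: aff_fun_def aff_inv_def fun_eq_iff field_simps)

text \<open>A^*(Q_p): a \<noteq> 0.  A^*(Z_p): |a|_p = 1 and b \<in> Z_p (i.e. |b|_p \<le> 1).\<close>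
definition AQ :: "('a::field \<times> 'a) set" where
  "AQ = {f. fst f \<noteq> 0}"

definition AZ :: "('a::field \<Rightarrow> real) \<Rightarrow> ('a \<times> 'a) set" where
  "AZ absv = {f. absv (fst f) = 1 \<and> absv (snd f) \<le> 1}"

definition Lfun :: "('a::field \<Rightarrow> real) \<Rightarrow> 'a \<times> 'a \<Rightarrow> real" where
  "Lfun absv f = max (absv (fst f - 1)) (absv (snd f))"

definition Lprime :: "('a::field \<Rightarrow> real) \<Rightarrow> real \<Rightarrow> 'a \<times> 'a \<Rightarrow> real" where
  "Lprime absv t f = (if f \<in> AZ absv then Lfun absv f else t)"

end

theory Submission
  imports Defs
begin

locale nav =
  fixes absv :: "'a::field \<Rightarrow> real"
  assumes nn: "\<And>x. absv x \<ge> 0"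
    and z: "\<And>x. absv x = 0 \<longleftrightarrow> x = 0"
    and mul: "\<And>x y. absv (x * y) = absv x * absv y"
    and ultra: "\<And>x y. absv (x + y) \<le> max (absv x) (absv y)"
begin

lemma one: "absv 1 = 1"
proof -
  have "absv 1 = absv 1 * absv 1" using mul[of 1 1] by simp
  moreover have "absv 1 \<noteq> 0" using z by simp
  ultimately show ?thesis by (metis mult_cancel_left1)
qed

lemma neg: "absv (- x) = absv x"
proof -
  have "absv (-1) * absv (-1) = 1" using mul[of "-1" "-1"] one by simp
  hence u: "(absv (-1) - 1) * (absv (-1) + 1) = 0" by (simp add: algebra_simps)
  have "absv (-1) + 1 \<noteq> 0" using nn[of "-1"] by linarith
  with u have "absv (-1) = 1" by simp
  then show ?thesis using mul[of "-1" x] by simp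
qed

lemma comm: "absv (x - y) = absv (y - x)"
  using neg[of "x - y"] by simp

lemma inv: "absv (inverse x) = inverse (absv x)"
proof (cases "x = 0")
  case True then show ?thesis using z[of 0] by simp
next
  case False
  have "absv x * absv (inverse x) = 1" using mul[of x "inverse x"] False one by simp
  then show ?thesis by (rule inverse_unique[symmetric])
qed

lemma dv: "absv (x / y) = absv x / absv y"
  using mul[of x "inverse y"] inv[of y] by (simp add: divide_inverse)

lemma sub_le: "absv (x - y) \<le> max (absv x) (absv y)"
  using ultra[of x "-y"] neg[of y] by simp

lemma eq_of_close: "absv (c - a) < absv a \<Longrightarrow> absv c = absv a"
proof -
  assume h: "absv (c - a) < absv a"
  have "absv c \<le> max (absv (c - a)) (absv a)" using ultra[of "c - a" a] by simp
  hence 1: "absv c \<le> absv a" using h by simp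
  have "absv a \<le> max (absv c) (absv (c - a))" using sub_le[of c "c - a"] comm by simp
  hence "absv a \<le> absv c" using h by (auto simp: max_def split: if_splits)
  with 1 show ?thesis by simp
qed

lemma dform:
  fixes t :: real
  shows "Lprime absv t (aff_comp (aff_inv g) f) =
    (if fst g \<noteq> 0 \<and> absv (fst f) = absv (fst g) \<and> absv (snd f - snd g) \<le> absv (fst g)
     then max (absv (fst f - fst g)) (absv (snd f - snd g)) / absv (fst g) else t)"
proof (cases "fst g = 0")
  case True
  have "fst (aff_comp (aff_inv g) f) = 0" by (simp add: aff_comp_def aff_inv_def True)
  hence "aff_comp (aff_inv g) f \<notin> AZ absv" using z[of 0] by (simp add: AZ_def)
  then show ?thesis by (simp add: Lprime_def True)
next
  case False
  have pos: "absv (fst g) > 0" using False nn[of "fst g"] z[of "fst g"] by (simp add: less_le)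
  have e1: "aff_comp (aff_inv g) f = (fst f / fst g, (snd f - snd g) / fst g)"
    by (simp add: aff_comp_def aff_inv_def divide_inverse algebra_simps)
  have e2: "fst f / fst g - 1 = (fst f - fst g) / fst g" using False by (simp add: diff_divide_distrib)
  have c1: "absv (fst f / fst g) = 1 \<longleftrightarrow> absv (fst f) = absv (fst g)"
    unfolding dv using pos by auto
  have c2: "absv ((snd f - snd g) / fst g) \<le> 1 \<longleftrightarrow> absv (snd f - snd g) \<le> absv (fst g)"
    unfolding dv using pos by simp
  have m: "max (absv (fst f / fst g - 1)) (absv ((snd f - snd g) / fst g))
      = max (absv (fst f - fst g)) (absv (snd f - snd g)) / absv (fst g)"
    unfolding e2 dv using pos by (simp add: max_divide_distrib_right)
  have L: "Lprime absv t (aff_comp (aff_inv g) f) = (if absv (fst f / fst g) = 1 \<and> absv ((snd f - snd g) / fst g) \<le> 1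
      then max (absv (fst f / fst g - 1)) (absv ((snd f - snd g) / fst g)) else t)"
    unfolding Lprime_def Lfun_def e1 AZ_def by simp
  show ?thesis unfolding L c1 c2 m using False by simp
qed

end

lemma aff_chain:
  fixes f g h :: "'a::field \<times> 'a"
  assumes "fst g \<noteq> 0"
  shows "aff_comp (aff_inv h) f = aff_comp (aff_comp (aff_inv h) g) (aff_comp (aff_inv g) f)"
proof -
  obtain a b where f: "f = (a,b)" by fastforce
  obtain c e where g: "g = (c,e)" by fastforce
  obtain k l where h: "h = (k,l)" by fastforce
  have c: "c \<noteq> 0" using assms g by simp
  have ci: "\<And>x. c * (inverse c * x) = x" "\<And>x y. c * (y * (inverse c * x)) = y * x"
    using c by (simp_all add: mult.assoc[symmetric] mult.commute[of c])
  show ?thesis unfolding f g h aff_comp_def aff_inv_def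
    using c by (simp add: divide_inverse algebra_simps ci)
qed
lemma aff_left:
  fixes f g h :: "'a::field \<times> 'a"
  assumes "fst h \<noteq> 0"
  shows "aff_comp (aff_inv (aff_comp h g)) (aff_comp h f) = aff_comp (aff_inv g) f"
proof -
  obtain a b where f: "f = (a,b)" by fastforce
  obtain c e where g: "g = (c,e)" by fastforce
  obtain k l where h: "h = (k,l)" by fastforce
  have k: "k \<noteq> 0" using assms h by simp
  show ?thesis unfolding f g h aff_comp_def aff_inv_def
    using k by (simp add: divide_inverse algebra_simps)
qed

theorem mainTheorem13:
  fixes p :: nat and absv :: "'a::field_char_0 \<Rightarrow> real" and t :: real
  assumes "prime p" and "is_Qp p absv" and "t \<ge> 1"
  defines "d \<equiv> \<lambda>f g. Lprime absv t (aff_comp (aff_inv g) f)"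
  shows "(\<forall>f\<in>AQ. Lprime absv t (aff_inv f) = Lprime absv t f)
    \<and> (\<forall>f\<in>AQ. \<forall>g\<in>AQ. Lprime absv t (aff_comp f g) \<le> max (Lprime absv t f) (Lprime absv t g))
    \<and> Metric_space AQ d
    \<and> (\<forall>f\<in>AQ. \<forall>g\<in>AQ. \<forall>h\<in>AQ. d f h \<le> max (d f g) (d g h))
    \<and> (\<forall>f\<in>AQ. \<forall>g\<in>AQ. \<forall>h\<in>AQ. d (aff_comp h f) (aff_comp h g) = d f g)
    \<and> Metric_space.mtopology AQ d =
        subtopology (prod_topology (Metric_space.mtopology UNIV (\<lambda>x y. absv (x - y)))
                                   (Metric_space.mtopology UNIV (\<lambda>x y. absv (x - y)))) AQ
    \<and> (\<forall>f\<in>AZ absv. \<forall>g\<in>AZ absv.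
         d f g = max (absv (fst f - fst g)) (absv (snd f - snd g)))"
proof -
  have h: "(\<forall>x. absv x \<ge> 0) \<and> (\<forall>x. absv x = 0 \<longleftrightarrow> x = 0) \<and>
     (\<forall>x y. absv (x * y) = absv x * absv y) \<and>
     (\<forall>x y. absv (x + y) \<le> max (absv x) (absv y))"
    using assms(2) unfolding is_Qp_def by (elim conjE) (intro conjI)
  interpret nav absv by unfold_locales (use h in auto)
  have t1: "t \<ge> 1" by fact
  have dd: "\<And>f g. d f g = (if fst g \<noteq> 0 \<and> absv (fst f) = absv (fst g) \<and> absv (snd f - snd g) \<le> absv (fst g)
     then max (absv (fst f - fst g)) (absv (snd f - snd g)) / absv (fst g) else t)"
    unfolding d_def by (rule dform)
  have z0: "absv 0 = 0" using z by simp
  have Lz: "\<And>f. Lprime absv t f = d f (1,0)"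
    unfolding d_def by (simp add: aff_comp_def aff_inv_def)
  have Li: "\<And>f. Lprime absv t (aff_inv f) = d (1,0) f"
    unfolding d_def by (simp add: aff_comp_def aff_inv_def)
  have P1: "\<forall>f\<in>AQ. Lprime absv t (aff_inv f) = Lprime absv t f"
  proof
    fix f :: "'a \<times> 'a" assume "f \<in> AQ"
    hence "fst f \<noteq> 0" by (simp add: AQ_def)
    have e1: "d (1,0) f = (if absv (fst f) = 1 \<and> absv (snd f) \<le> 1
        then max (absv (fst f - 1)) (absv (snd f)) else t)"
      using dd[of "(1,0)" f] \<open>fst f \<noteq> 0\<close> one neg[of "snd f"] comm[of 1 "fst f"] by auto
    have e2: "d f (1,0) = (if absv (fst f) = 1 \<and> absv (snd f) \<le> 1
        then max (absv (fst f - 1)) (absv (snd f)) else t)"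
      using dd[of f "(1,0)"] one by auto
    have "Lprime absv t (aff_inv f) = d (1,0) f" by (rule Li)
    also have "\<dots> = d f (1,0)" using e1 e2 by simp
    also have "\<dots> = Lprime absv t f" by (rule Lz[symmetric])
    finally show "Lprime absv t (aff_inv f) = Lprime absv t f" .
  qed
  have LeAZ: "\<And>f. f \<in> AZ absv \<Longrightarrow> Lfun absv f \<le> 1"
  proof -
    fix f :: "'a \<times> 'a" assume "f \<in> AZ absv"
    hence a: "absv (fst f) = 1" "absv (snd f) \<le> 1" by (auto simp: AZ_def)
    have "absv (fst f - 1) \<le> max (absv (fst f)) (absv 1)" by (rule sub_le)
    with a one show "Lfun absv f \<le> 1" by (simp add: Lfun_def)
  qed
  have Lnn: "\<And>f. Lprime absv t f \<ge> 0"
    using t1 nn by (auto simp: Lprime_def Lfun_def le_max_iff_disj)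
  have P2: "\<forall>f\<in>AQ. \<forall>g\<in>AQ. Lprime absv t (aff_comp f g) \<le> max (Lprime absv t f) (Lprime absv t g)"
  proof (intro ballI)
    fix f g :: "'a \<times> 'a" assume "f \<in> AQ" "g \<in> AQ"
    show "Lprime absv t (aff_comp f g) \<le> max (Lprime absv t f) (Lprime absv t g)"
    proof (cases "f \<in> AZ absv \<and> g \<in> AZ absv")
      case True
      obtain a b where f: "f = (a, b)" by (cases f)
      obtain c e where g: "g = (c, e)" by (cases g)
      have A: "absv a = 1" "absv b \<le> 1" "absv c = 1" "absv e \<le> 1"
        using True by (auto simp: AZ_def f g)
      have "absv (a * e + b) \<le> max (absv (a * e)) (absv b)" by (rule ultra)
      hence s: "absv (a * e + b) \<le> max (absv e) (absv b)" using A by (simp add: mul)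
      have eq: "a * c - 1 = a * (c - 1) + (a - 1)" by (simp add: algebra_simps)
      have "absv (a * c - 1) \<le> max (absv (a * (c - 1))) (absv (a - 1))" by (subst eq) (rule ultra)
      hence s2: "absv (a * c - 1) \<le> max (absv (c - 1)) (absv (a - 1))" using A by (simp add: mul)
      have fg: "aff_comp f g = (a * c, a * e + b)" by (simp add: aff_comp_def f g)
      have m1: "absv (a * c) = 1" using A by (simp add: mul)
      have m2: "absv (a * e + b) \<le> 1" using s A(2,4) by (simp add: max.bounded_iff)
      have inAZ: "aff_comp f g \<in> AZ absv" unfolding fg AZ_def using m1 m2 by simp
      have Lfg: "Lprime absv t (aff_comp f g) = max (absv (a * c - 1)) (absv (a * e + b))"
        using inAZ unfolding Lprime_def Lfun_def fg by simp
      have Lf: "Lprime absv t f = max (absv (a - 1)) (absv b)"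
        using True unfolding Lprime_def Lfun_def f by simp
      have Lg: "Lprime absv t g = max (absv (c - 1)) (absv e)"
        using True unfolding Lprime_def Lfun_def g by simp
      have r1: "max (absv (c - 1)) (absv (a - 1)) \<le> max (max (absv (a - 1)) (absv b)) (max (absv (c - 1)) (absv e))"
        by (rule max.boundedI) (simp_all add: le_max_iff_disj)
      have r2: "max (absv e) (absv b) \<le> max (max (absv (a - 1)) (absv b)) (max (absv (c - 1)) (absv e))"
        by (rule max.boundedI) (simp_all add: le_max_iff_disj)
      show ?thesis unfolding Lfg Lf Lg
        by (rule max.boundedI[OF order_trans[OF s2 r1] order_trans[OF s r2]])
    next
      case False
      hence "Lprime absv t f = t \<or> Lprime absv t g = t" unfolding Lprime_def by auto
      hence ge: "max (Lprime absv t f) (Lprime absv t g) \<ge> t"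
        by (metis max.cobounded1 max.cobounded2)
      have le: "Lprime absv t (aff_comp f g) \<le> t"
      proof (cases "aff_comp f g \<in> AZ absv")
        case True
        then have "Lprime absv t (aff_comp f g) = Lfun absv (aff_comp f g)" by (simp add: Lprime_def)
        with LeAZ[OF True] t1 show ?thesis by linarith
      next
        case False
        then show ?thesis by (simp add: Lprime_def)
      qed
      from le ge show ?thesis by linarith
    qed
  qed
  have P4: "\<forall>f\<in>AQ. \<forall>g\<in>AQ. \<forall>h\<in>AQ. d f h \<le> max (d f g) (d g h)"
  proof (intro ballI)
    fix f g h :: "'a \<times> 'a" assume H: "f \<in> AQ" "g \<in> AQ" "h \<in> AQ"
    have X: "aff_comp (aff_inv h) g \<in> AQ" "aff_comp (aff_inv g) f \<in> AQ"
      using H by (auto simp: AQ_def aff_comp_def aff_inv_def)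
    have "d f h = Lprime absv t (aff_comp (aff_comp (aff_inv h) g) (aff_comp (aff_inv g) f))"
      unfolding d_def using H aff_chain[of g h f] by (simp add: AQ_def)
    also have "\<dots> \<le> max (d g h) (d f g)" unfolding d_def by (rule P2[rule_format, OF X])
    finally show "d f h \<le> max (d f g) (d g h)" by (simp add: max.commute)
  qed
  have dnn: "\<And>x y. d x y \<ge> 0" unfolding d_def by (rule Lnn)
  have dcomm: "\<And>x y. d x y = d y x"
  proof -
    fix x y :: "'a \<times> 'a"
    have "(fst y \<noteq> 0 \<and> absv (fst x) = absv (fst y) \<and> absv (snd x - snd y) \<le> absv (fst y))
      \<longleftrightarrow> (fst x \<noteq> 0 \<and> absv (fst y) = absv (fst x) \<and> absv (snd y - snd x) \<le> absv (fst x))"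
      using z[of "fst x"] z[of "fst y"] comm[of "snd x" "snd y"] by auto
    then show "d x y = d y x" unfolding dd using comm[of "fst x" "fst y"] comm[of "snd x" "snd y"]
      by auto
  qed
  have MS: "Metric_space AQ d"
  proof
    show "\<And>x y. 0 \<le> d x y" by (rule dnn)
    show "\<And>x y. d x y = d y x" by (rule dcomm)
    show "\<And>x y z. x \<in> AQ \<Longrightarrow> y \<in> AQ \<Longrightarrow> z \<in> AQ \<Longrightarrow> d x z \<le> d x y + d (y::'a\<times>'a) z"
    proof -
      fix x y z :: "'a \<times> 'a" assume "x \<in> AQ" "y \<in> AQ" "z \<in> AQ"
      then have "d x z \<le> max (d x y) (d y z)" using P4 by blast
      then show "d x z \<le> d x y + d y z" using dnn[of x y] dnn[of y z] by linarith
    qed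
    show "\<And>x y. x \<in> AQ \<Longrightarrow> y \<in> AQ \<Longrightarrow> (d x y = 0) = (x = (y::'a\<times>'a))"
    proof -
      fix x y :: "'a \<times> 'a" assume "x \<in> AQ" "y \<in> AQ"
      hence y0: "fst y \<noteq> 0" by (simp add: AQ_def)
      hence yp: "absv (fst y) > 0" using nn[of "fst y"] z[of "fst y"] by (simp add: less_le)
      show "(d x y = 0) = (x = y)"
      proof
        assume "x = y" then show "d x y = 0" unfolding dd using y0 yp z0 by simp
      next
        assume d0: "d x y = 0"
        show "x = y"
        proof (cases "fst y \<noteq> 0 \<and> absv (fst x) = absv (fst y) \<and> absv (snd x - snd y) \<le> absv (fst y)")
          case True
          hence "max (absv (fst x - fst y)) (absv (snd x - snd y)) = 0"
            using d0 yp unfolding dd by simp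
          hence "absv (fst x - fst y) = 0" "absv (snd x - snd y) = 0"
            using max.cobounded1[of "absv (fst x - fst y)" "absv (snd x - snd y)"]
              max.cobounded2[of "absv (fst x - fst y)" "absv (snd x - snd y)"]
              nn[of "fst x - fst y"] nn[of "snd x - snd y"] by linarith+
          then show "x = y" using z by (simp add: prod_eq_iff)
        next
          case False
          have "d x y = t" unfolding dd by (rule if_not_P[OF False])
          then show ?thesis using d0 t1 by simp
        qed
      qed
    qed
  qed
  interpret M: Metric_space AQ d by (rule MS)
  have P5: "\<forall>f\<in>AQ. \<forall>g\<in>AQ. \<forall>h\<in>AQ. d (aff_comp h f) (aff_comp h g) = d f g"
  proof (intro ballI)
    fix f g h :: "'a \<times> 'a" assume "f \<in> AQ" "g \<in> AQ" "h \<in> AQ"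
    hence "fst h \<noteq> 0" by (simp add: AQ_def)
    then show "d (aff_comp h f) (aff_comp h g) = d f g"
      unfolding d_def using aff_left[of h g f] by simp
  qed
  have P7: "\<forall>f\<in>AZ absv. \<forall>g\<in>AZ absv. d f g = max (absv (fst f - fst g)) (absv (snd f - snd g))"
  proof (intro ballI)
    fix f g :: "'a \<times> 'a" assume "f \<in> AZ absv" "g \<in> AZ absv"
    hence A: "absv (fst f) = 1" "absv (snd f) \<le> 1" "absv (fst g) = 1" "absv (snd g) \<le> 1"
      by (auto simp: AZ_def)
    have "fst g \<noteq> 0" using A z0 by auto
    moreover have "absv (snd f - snd g) \<le> 1" using sub_le[of "snd f" "snd g"] A by simp
    ultimately show "d f g = max (absv (fst f - fst g)) (absv (snd f - snd g))"
      unfolding dd using A by simp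
  qed
  have P6: "M.mtopology =
        subtopology (prod_topology (Metric_space.mtopology UNIV (\<lambda>x y. absv (x - y)))
                                   (Metric_space.mtopology UNIV (\<lambda>x y. absv (x - y)))) AQ"
  proof -
    have MU: "Metric_space UNIV (\<lambda>x y. absv (x - y))"
    proof
      show "\<And>x y. 0 \<le> absv (x - y)" by (rule nn)
      show "\<And>x y. absv (x - y) = absv (y - x)" by (rule comm)
      show "\<And>x y. x \<in> UNIV \<Longrightarrow> y \<in> UNIV \<Longrightarrow> (absv (x - y) = 0) = (x = y)" using z by simp
      show "\<And>x y z. x \<in> UNIV \<Longrightarrow> y \<in> UNIV \<Longrightarrow> z \<in> UNIV \<Longrightarrow> absv (x - z) \<le> absv (x - y) + absv (y - z)"
      proof -
        fix x y z :: 'a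
        have "absv (x - z) \<le> max (absv (x - y)) (absv (y - z))" using ultra[of "x - y" "y - z"] by simp
        then show "absv (x - z) \<le> absv (x - y) + absv (y - z)" using nn[of "x - y"] nn[of "y - z"] by linarith
      qed
    qed
    interpret U: Metric_space UNIV "\<lambda>x y. absv (x - y)" by (rule MU)
    define P where "P = prod_topology U.mtopology U.mtopology"
    define box where "box = (\<lambda>f r. {g. absv (fst g - fst f) < r \<and> absv (snd g - snd f) < r})"
    have boxc: "\<And>W. openin P W \<longleftrightarrow> (\<forall>f\<in>W. \<exists>r>0. box f r \<subseteq> W)"
    proof
      fix W assume oW: "openin P W"
      show "\<forall>f\<in>W. \<exists>r>0. box f r \<subseteq> W"
      proof
        fix f :: "'a \<times> 'a" assume "f \<in> W"
        hence fW: "(fst f, snd f) \<in> W" by simp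
        have "\<exists>U V. openin U.mtopology U \<and> openin U.mtopology V \<and> fst f \<in> U \<and> snd f \<in> V \<and> U \<times> V \<subseteq> W"
          using oW[unfolded P_def openin_prod_topology_alt, rule_format, OF fW] .
        then obtain V1 V2 where V: "openin U.mtopology V1" "openin U.mtopology V2"
          "fst f \<in> V1" "snd f \<in> V2" "V1 \<times> V2 \<subseteq> W"
          by blast
        have "\<exists>r>0. U.mball (fst f) r \<subseteq> V1" using V(1,3) U.openin_mtopology[of V1] by blast
        then obtain r1 where r1: "r1 > 0" "U.mball (fst f) r1 \<subseteq> V1" by blast
        have "\<exists>r>0. U.mball (snd f) r \<subseteq> V2" using V(2,4) U.openin_mtopology[of V2] by blast
        then obtain r2 where r2: "r2 > 0" "U.mball (snd f) r2 \<subseteq> V2" by blast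
        have "box f (min r1 r2) \<subseteq> W"
        proof
          fix g :: "'a \<times> 'a" assume "g \<in> box f (min r1 r2)"
          hence "absv (fst g - fst f) < r1" "absv (snd g - snd f) < r2" by (simp_all add: box_def)
          hence "absv (fst f - fst g) < r1" "absv (snd f - snd g) < r2"
            using comm[of "fst g" "fst f"] comm[of "snd g" "snd f"] by simp_all
          hence "fst g \<in> U.mball (fst f) r1" "snd g \<in> U.mball (snd f) r2" by simp_all
          hence "fst g \<in> V1" "snd g \<in> V2" using r1 r2 by blast+
          hence "g \<in> V1 \<times> V2" by (simp add: mem_Times_iff)
          then show "g \<in> W" using V(5) by blast
        qed
        moreover have "min r1 r2 > 0" using r1 r2 by simp
        ultimately show "\<exists>r>0. box f r \<subseteq> W" by blast
      qed
    next
      fix W assume H: "\<forall>f\<in>W. \<exists>r>0. box f r \<subseteq> W"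
      show "openin P W" unfolding P_def openin_prod_topology_alt
      proof (intro allI impI)
        fix x y :: 'a assume "(x, y) \<in> W"
        then obtain r where r: "r > 0" "box (x,y) r \<subseteq> W" using H by blast
        have sub: "U.mball x r \<times> U.mball y r \<subseteq> W"
        proof
          fix q :: "'a \<times> 'a" assume "q \<in> U.mball x r \<times> U.mball y r"
          then have "absv (x - fst q) < r" "absv (y - snd q) < r" by (auto simp: mem_Times_iff)
          hence "q \<in> box (x,y) r" unfolding box_def using comm[of "fst q" x] comm[of "snd q" y] by simp
          with r(2) show "q \<in> W" by blast
        qed
        have "x \<in> U.mball x r" "y \<in> U.mball y r" using r(1) z0 by simp_all
        then show "\<exists>U V. openin U.mtopology U \<and> openin U.mtopology V \<and> x \<in> U \<and> y \<in> V \<and> U \<times> V \<subseteq> W"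
          using sub U.openin_mball by blast
      qed
    qed
    have pos: "absv (fst f) > 0" if "f \<in> AQ" for f :: "'a \<times> 'a"
    proof -
      have "fst f \<noteq> 0" using that by (simp add: AQ_def)
      then show ?thesis using nn[of "fst f"] z[of "fst f"] by (simp add: less_le)
    qed
    have B1: "\<And>f r. f \<in> AQ \<Longrightarrow> r > 0 \<Longrightarrow> \<exists>s>0. box f s \<subseteq> M.mball f r"
    proof -
      fix f :: "'a \<times> 'a" and r :: real assume f: "f \<in> AQ" and r: "r > 0"
      define s where "s = min r 1 * absv (fst f)"
      have s: "s > 0" "s \<le> absv (fst f)" using pos[OF f] r by (auto simp: s_def min_def)
      have "box f s \<subseteq> M.mball f r"
      proof
        fix g :: "'a \<times> 'a" assume "g \<in> box f s"
        hence g: "absv (fst g - fst f) < s" "absv (snd g - snd f) < s" by (auto simp: box_def)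
        have ga: "absv (fst g) = absv (fst f)" using g(1) s(2) eq_of_close[of "fst g" "fst f"] by linarith
        hence g0: "fst g \<noteq> 0" using pos[OF f] z0 by auto
        have c: "absv (snd f - snd g) \<le> absv (fst g)" using g(2) s(2) ga comm[of "snd f"] by simp
        have m: "max (absv (fst f - fst g)) (absv (snd f - snd g)) < s"
          using g comm[of "fst f"] comm[of "snd f"] by simp
        have "d f g = max (absv (fst f - fst g)) (absv (snd f - snd g)) / absv (fst g)"
          unfolding dd using g0 ga c by simp
        also have "\<dots> < s / absv (fst f)" using m ga pos[OF f] by (simp add: divide_strict_right_mono)
        also have "\<dots> \<le> r" using pos[OF f] by (simp add: s_def)
        finally have "d f g < r" .
        moreover have "g \<in> AQ" using g0 by (simp add: AQ_def)
        ultimately show "g \<in> M.mball f r" using f by simp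
      qed
      then show "\<exists>s>0. box f s \<subseteq> M.mball f r" using s by blast
    qed
    have B2: "\<And>f r. f \<in> AQ \<Longrightarrow> r > 0 \<Longrightarrow> \<exists>s>0. M.mball f s \<subseteq> box f r"
    proof -
      fix f :: "'a \<times> 'a" and r :: real assume f: "f \<in> AQ" and r: "r > 0"
      define s where "s = min (r / absv (fst f)) 1"
      have s: "s > 0" "s \<le> 1" "s * absv (fst f) \<le> r"
        using pos[OF f] r by (auto simp: s_def min_def field_simps)
      have "M.mball f s \<subseteq> box f r"
      proof
        fix g :: "'a \<times> 'a" assume "g \<in> M.mball f s"
        hence g: "g \<in> AQ" "d f g < s" by auto
        have C: "fst g \<noteq> 0 \<and> absv (fst f) = absv (fst g) \<and> absv (snd f - snd g) \<le> absv (fst g)"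
        proof (rule ccontr)
          assume "\<not> ?thesis"
          hence "d f g = t" unfolding dd by (rule if_not_P)
          then show False using g s t1 by linarith
        qed
        hence "d f g = max (absv (fst f - fst g)) (absv (snd f - snd g)) / absv (fst g)"
          unfolding dd by (rule if_P)
        hence "max (absv (fst f - fst g)) (absv (snd f - snd g)) / absv (fst g) < s"
          using g(2) by simp
        hence "max (absv (fst f - fst g)) (absv (snd f - snd g)) < s * absv (fst f)"
          using C pos[OF f] by (simp add: divide_less_eq)
        hence "max (absv (fst f - fst g)) (absv (snd f - snd g)) < r" using s by linarith
        then show "g \<in> box f r" by (simp add: box_def comm)
      qed
      then show "\<exists>s>0. M.mball f s \<subseteq> box f r" using s by blast
    qed
    have AQo: "openin P AQ"
      unfolding boxc
    proof
      fix f :: "'a \<times> 'a" assume f: "f \<in> AQ"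
      have "box f (absv (fst f)) \<subseteq> AQ"
      proof
        fix g :: "'a \<times> 'a" assume "g \<in> box f (absv (fst f))"
        hence "absv (fst g - fst f) < absv (fst f)" by (simp add: box_def)
        hence "absv (fst g) = absv (fst f)" by (rule eq_of_close)
        then show "g \<in> AQ" using pos[OF f] z0 by (auto simp: AQ_def)
      qed
      then show "\<exists>r>0. box f r \<subseteq> AQ" using pos[OF f] by blast
    qed
    show ?thesis
      unfolding P_def[symmetric] topology_eq
    proof
      fix W
      show "openin M.mtopology W = openin (subtopology P AQ) W"
        unfolding openin_open_subtopology[OF AQo] M.openin_mtopology boxc
      proof (intro iffI conjI ballI)
        assume H: "W \<subseteq> AQ \<and> (\<forall>x. x \<in> W \<longrightarrow> (\<exists>r>0. M.mball x r \<subseteq> W))"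
        show "W \<subseteq> AQ" using H by blast
        fix f :: "'a \<times> 'a" assume f: "f \<in> W"
        then obtain r where "r > 0" "M.mball f r \<subseteq> W" using H by blast
        moreover have fA: "f \<in> AQ" using H f by blast
        moreover obtain s where "s > 0" "box f s \<subseteq> M.mball f r" using B1[OF fA \<open>r > 0\<close>] by blast
        ultimately show "\<exists>r>0. box f r \<subseteq> W" by (meson subset_trans)
      next
        assume H: "(\<forall>f\<in>W. \<exists>r>0. box f r \<subseteq> W) \<and> W \<subseteq> AQ"
        show "W \<subseteq> AQ" using H by blast
        show "\<forall>x. x \<in> W \<longrightarrow> (\<exists>r>0. M.mball x r \<subseteq> W)"
        proof (intro allI impI)
          fix f :: "'a \<times> 'a" assume f: "f \<in> W"
          then obtain r where "r > 0" "box f r \<subseteq> W" using H by blast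
          moreover have fA: "f \<in> AQ" using H f by blast
          moreover obtain s where "s > 0" "M.mball f s \<subseteq> box f r" using B2[OF fA \<open>r > 0\<close>] by blast
          ultimately show "\<exists>r>0. M.mball f r \<subseteq> W" by (meson subset_trans)
        qed
      qed
    qed
  qed
  show ?thesis by (intro conjI; fact)
qed

end
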